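(* Let $R$ be a commutative ring with identity. The power series ring $R[[x]]$ is complemented if and only if $R$ is reduced and for each countably generated ideal $I$ of $R$ there is a countably generated ideal $J$ of $R$ such that $IJ=0$ and $I+J$ is a dense ideal of $R$.
   Context: An element $a$ of a ring $A$ is complemented if there is $b\in A$ with $ab=0$ and $a+b$ a regular element (non-zero-divisor) of $A$; $A$ is complemented if every element is complemented. An ideal is dense if its annihilator is zero. *)

theory Defs
  imports "HOL-Computational_Algebra.Formal_Power_Series" "HOL-Library.Countable_Set"
begin

definition regular_elem :: "'a::comm_ring_1 \<Rightarrow> bool" where
  "regular_elem x \<longleftrightarrow> (\<forall>c. x * c = 0 \<longrightarrow> c = 0)"

definition complemented_elem :: "'a::comm_ring_1 \<Rightarrow> bool" where
  "complemented_elem a \<longleftrightarrow> (\<exists>b. a * b = 0 \<and> regular_elem (a + b))"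

definition complemented_ring :: "'a::comm_ring_1 itself \<Rightarrow> bool" where
  "complemented_ring _ \<longleftrightarrow> (\<forall>a::'a. complemented_elem a)"

definition reduced_ring :: "'a::comm_ring_1 itself \<Rightarrow> bool" where
  "reduced_ring _ \<longleftrightarrow> (\<forall>(a::'a) (n::nat). a ^ n = 0 \<longrightarrow> a = 0)"

definition gen_ideal :: "'a::comm_ring_1 set \<Rightarrow> 'a set" where
  "gen_ideal S = {x. \<exists>F c. finite F \<and> F \<subseteq> S \<and> x = (\<Sum>s\<in>F. c s * s)}"

definition countably_generated_ideal :: "'a::comm_ring_1 set \<Rightarrow> bool" where
  "countably_generated_ideal I \<longleftrightarrow> (\<exists>S. countable S \<and> I = gen_ideal S)"

definition ideal_sum :: "'a::comm_ring_1 set \<Rightarrow> 'a set \<Rightarrow> 'a set" where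
  "ideal_sum I J = {i + j | i j. i \<in> I \<and> j \<in> J}"

definition ideal_prod :: "'a::comm_ring_1 set \<Rightarrow> 'a set \<Rightarrow> 'a set" where
  "ideal_prod I J = gen_ideal {i * j | i j. i \<in> I \<and> j \<in> J}"

definition annihilator :: "'a::comm_ring_1 set \<Rightarrow> 'a set" where
  "annihilator I = {r. \<forall>x\<in>I. r * x = 0}"

definition dense_ideal :: "'a::comm_ring_1 set \<Rightarrow> bool" where
  "dense_ideal I \<longleftrightarrow> annihilator I = {0}"

end

theory Submission
  imports Defs
begin

lemma sq_zero_reduced:
  fixes a :: "'a::comm_ring_1"
  assumes H: "\<And>b::'a. b^2 = 0 \<Longrightarrow> b = 0"
  shows "a^n = 0 \<Longrightarrow> a = 0"
proof (induction n rule: less_induct)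
  case (less n)
  show ?case
  proof (cases "n \<le> 1")
    case True
    then have "n = 0 \<or> n = 1" by auto
    then show ?thesis
    proof
      assume "n = 0" then have "(1::'a) = 0" using less.prems by simp
      then show ?thesis by (metis mult_1_right mult_zero_right)
    next
      assume "n = 1" then show ?thesis using less.prems by simp
    qed
  next
    case False
    have e: "(n-1)*2 = n + (n-2)" using False by simp
    have "(a^(n-1))^2 = a^((n-1)*2)" by (simp add: power_mult)
    also have "\<dots> = a^(n+(n-2))" using e by simp
    also have "\<dots> = a^n * a^(n-2)" by (simp add: power_add)
    also have "\<dots> = 0" using less.prems by simp
    finally have "a^(n-1) = 0" using H by blast
    then show ?thesis using less.IH[of "n-1"] False by simp
  qed
qed

lemma arm0:
  fixes f g :: "'a::comm_ring_1 fps"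
  assumes H: "\<And>b::'a. b^2 = 0 \<Longrightarrow> b = 0" and fg: "f * g = 0"
  shows "(fps_nth f 0) * (fps_nth g j) = 0"
proof (induction j rule: less_induct)
  case (less n)
  have "0 = (fps_nth f 0) * (fps_nth (f*g) n)" using fg by simp
  also have "\<dots> = (\<Sum>i=0..n. (fps_nth f i) * ((fps_nth f 0) * (fps_nth g (n-i))))"
    by (simp add: fps_mult_nth sum_distrib_left mult.left_commute)
  also have "\<dots> = (fps_nth f 0) * ((fps_nth f 0) * (fps_nth g n))"
  proof -
    have "(\<Sum>i=0..n. (fps_nth f i) * ((fps_nth f 0) * (fps_nth g (n-i)))) = (\<Sum>i\<in>{0}. (fps_nth f i) * ((fps_nth f 0) * (fps_nth g (n-i))))"
    proof (rule sum.mono_neutral_right)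
      show "\<forall>i\<in>{0..n} - {0}. (fps_nth f i) * ((fps_nth f 0) * (fps_nth g (n-i))) = 0"
        using less.IH by auto
    qed auto
    then show ?thesis by simp
  qed
  finally have "((fps_nth f 0) * (fps_nth g n))^2 = 0"
    by (simp add: power2_eq_square) (metis mult.assoc mult.left_commute mult_zero_left)
  then show ?case using H by blast
qed

lemma arm:
  fixes f g :: "'a::comm_ring_1 fps"
  assumes H: "\<And>b::'a. b^2 = 0 \<Longrightarrow> b = 0"
  shows "f * g = 0 \<Longrightarrow> (fps_nth f i) * (fps_nth g j) = 0"
proof (induction i arbitrary: f)
  case 0
  then show ?case using arm0[OF H] by blast
next
  case (Suc i)
  define f' where "f' = Abs_fps (\<lambda>n. (fps_nth f (Suc n)))"
  have fdec: "f = fps_const ((fps_nth f 0)) + fps_X * f'"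
    by (rule fps_ext) (auto simp: f'_def fps_X_mult_nth)
  have c0: "fps_const ((fps_nth f 0)) * g = 0"
    by (rule fps_ext) (simp add: arm0[OF H Suc.prems])
  have "fps_X * (f' * g) = 0"
    using Suc.prems c0 fdec by (metis add_0 distrib_right mult.assoc)
  then have "f' * g = 0"
  proof -
    assume A: "fps_X * (f' * g) = 0"
    show ?thesis
    proof (rule fps_ext)
      fix n
      have "(fps_nth (fps_X * (f' * g)) (Suc n)) = 0" using A by simp
      then show "(fps_nth (f' * g) n) = (fps_nth 0 n)" by (simp add: fps_X_mult_nth)
    qed
  qed
  from Suc.IH[OF this] show ?case by (simp add: f'_def)
qed

lemma gen_mem: "s \<in> S \<Longrightarrow> s \<in> gen_ideal S"
  unfolding gen_ideal_def
  by (rule CollectI, rule exI[of _ "{s}"], rule exI[of _ "\<lambda>_. 1"]) auto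

lemma gen_zero: "0 \<in> gen_ideal S"
  unfolding gen_ideal_def
  by (rule CollectI, rule exI[of _ "{}"]) auto

lemma gen_ann:
  assumes "\<forall>s\<in>S. r * s = 0" "x \<in> gen_ideal S"
  shows "r * x = 0"
proof -
  obtain F c where "finite F" "F \<subseteq> S" "x = (\<Sum>s\<in>F. c s * s)"
    using assms(2) unfolding gen_ideal_def by blast
  then show ?thesis using assms(1)
  proof -
    have "r * x = (\<Sum>s\<in>F. c s * (r * s))"
      using \<open>x = _\<close> by (simp add: sum_distrib_left mult.left_commute)
    also have "\<dots> = 0" using \<open>F \<subseteq> S\<close> assms(1) by (intro sum.neutral) auto
    finally show ?thesis .
  qed
qed

lemma prod_zero:
  assumes "\<forall>i\<in>I. \<forall>j\<in>J. i * j = 0"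
  shows "ideal_prod I J = {0}"
proof
  show "ideal_prod I J \<subseteq> {0}"
  proof
    fix x assume "x \<in> ideal_prod I J"
    then have "1 * x = 0" unfolding ideal_prod_def
      by (rule gen_ann[rotated]) (use assms in auto)
    then show "x \<in> {0}" by simp
  qed
  show "{0} \<subseteq> ideal_prod I J" unfolding ideal_prod_def using gen_zero by auto
qed

lemma prod_zeroD:
  assumes "ideal_prod I J = {0}" "i \<in> I" "j \<in> J"
  shows "i * j = 0"
proof -
  have "i * j \<in> ideal_prod I J" unfolding ideal_prod_def
    by (rule gen_mem) (use assms in blast)
  then show ?thesis using assms(1) by simp
qed

theorem mainTheorem3:
  shows "complemented_ring TYPE('a::comm_ring_1 fps) \<longleftrightarrow>
    (reduced_ring TYPE('a) \<and>
     (\<forall>I::'a set. countably_generated_ideal I \<longrightarrow>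
        (\<exists>J. countably_generated_ideal J \<and> ideal_prod I J = {0} \<and>
             dense_ideal (ideal_sum I J))))"
proof
  assume C: "complemented_ring TYPE('a::comm_ring_1 fps)"
  have H: "b = 0" if "b^2 = 0" for b :: 'a
  proof -
    obtain g where g: "fps_const b * g = 0" "regular_elem (fps_const b + g)"
      using C unfolding complemented_ring_def complemented_elem_def by blast
    have "(fps_const b + g) * fps_const b = fps_const (b*b) + fps_const b * g"
      by (metis distrib_right fps_const_mult mult.commute)
    also have "\<dots> = 0" using g(1) that by (simp add: power2_eq_square)
    finally have "(fps_const b + g) * fps_const b = 0" .
    then have "fps_const b = 0" using g(2) unfolding regular_elem_def by blast
    then show ?thesis by simp
  qed
  have red: "reduced_ring TYPE('a)"
    unfolding reduced_ring_def using sq_zero_reduced[OF H] by blast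
  have X: "\<exists>J. countably_generated_ideal J \<and> ideal_prod I J = {0} \<and> dense_ideal (ideal_sum I J)"
    if cgI: "countably_generated_ideal I" for I :: "'a set"
  proof -
    obtain S where S: "countable S" "I = gen_ideal S"
      using cgI unfolding countably_generated_ideal_def by blast
    define e where "e = from_nat_into (insert 0 S)"
    have re: "range e = insert 0 S" unfolding e_def
      by (rule range_from_nat_into) (use S in auto)
    define f where "f = Abs_fps e"
    obtain g where g: "f * g = 0" "regular_elem (f + g)"
      using C unfolding complemented_ring_def complemented_elem_def by blast
    define J where "J = gen_ideal (range (fps_nth g))"
    have cJ: "countably_generated_ideal J" unfolding countably_generated_ideal_def J_def by (rule exI[of _ "range (fps_nth g)"]) simp
    have eg: "e i * (fps_nth g j) = 0" for i j using arm[OF H g(1), of i j] by (simp add: f_def)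
    have sg: "s * (fps_nth g j) = 0" if "s \<in> S" for s j
    proof -
      have "s \<in> range e" using re that by simp
      then obtain i where "s = e i" by (auto simp del: range_eqI)
      then show ?thesis using eg by simp
    qed
    have pz: "ideal_prod I J = {0}"
    proof (rule prod_zero, intro ballI)
      fix i j assume i: "i \<in> I" and j: "j \<in> J"
      have "\<forall>s\<in>range (fps_nth g). i * s = 0"
      proof
        fix s assume "s \<in> range (fps_nth g)"
        then obtain k where k: "s = (fps_nth g k)" by blast
        have "\<forall>s'\<in>S. fps_nth g k * s' = 0" using sg by (simp add: mult.commute)
        then have "(fps_nth g k) * i = 0" using i S(2) gen_ann[of S "fps_nth g k" i] by simp
        then show "i * s = 0" by (simp add: k mult.commute)
      qed
      then show "i * j = 0" using gen_ann[of "range (fps_nth g)" i j] j unfolding J_def by simp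
    qed
    have dn: "dense_ideal (ideal_sum I J)"
      unfolding dense_ideal_def
    proof
      show "annihilator (ideal_sum I J) \<subseteq> {0}"
      proof
        fix r assume r: "r \<in> annihilator (ideal_sum I J)"
        have rI: "r * x = 0" if "x \<in> I" for x
        proof -
          have "x + 0 \<in> ideal_sum I J" unfolding ideal_sum_def J_def using that gen_zero by blast
          then show ?thesis using r unfolding annihilator_def by auto
        qed
        have rJ: "r * x = 0" if "x \<in> J" for x
        proof -
          have "0 + x \<in> ideal_sum I J" unfolding ideal_sum_def S(2) using that gen_zero by blast
          then show ?thesis using r unfolding annihilator_def by auto
        qed
        have "(f + g) * fps_const r = 0"
        proof (rule fps_ext)
          fix n
          have "e n \<in> I"
          proof -
            have "e n \<in> insert 0 S" using re[symmetric] rangeI[of e n] by simp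
            then show ?thesis using S(2) gen_zero gen_mem by auto
          qed
          moreover have "(fps_nth g n) \<in> J" unfolding J_def by (rule gen_mem) simp
          ultimately have "r * e n = 0" "r * fps_nth g n = 0" using rI rJ by blast+
          then show "(fps_nth ((f + g) * fps_const r) n) = (fps_nth 0 n)"
            by (simp add: f_def distrib_right mult.commute[of _ r])
        qed
        then have "fps_const r = 0" using g(2) unfolding regular_elem_def by blast
        then show "r \<in> {0}" by simp
      qed
      show "{0} \<subseteq> annihilator (ideal_sum I J)" unfolding annihilator_def by auto
    qed
    show ?thesis by (rule exI[of _ J], intro conjI cJ pz dn)
  qed
  show "reduced_ring TYPE('a) \<and>
     (\<forall>I::'a set. countably_generated_ideal I \<longrightarrow>
        (\<exists>J. countably_generated_ideal J \<and> ideal_prod I J = {0} \<and>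
             dense_ideal (ideal_sum I J)))"
  proof (intro conjI allI impI)
    show "reduced_ring TYPE('a)" by (rule red)
  next
    fix I :: "'a set" assume "countably_generated_ideal I"
    then show "\<exists>J. countably_generated_ideal J \<and> ideal_prod I J = {0} \<and>
             dense_ideal (ideal_sum I J)" by (rule X)
  qed
next
  assume R: "reduced_ring TYPE('a) \<and>
     (\<forall>I::'a set. countably_generated_ideal I \<longrightarrow>
        (\<exists>J. countably_generated_ideal J \<and> ideal_prod I J = {0} \<and>
             dense_ideal (ideal_sum I J)))"
  have H: "b = 0" if "b^2 = 0" for b :: 'a
    using R that unfolding reduced_ring_def by blast
  show "complemented_ring TYPE('a::comm_ring_1 fps)"
    unfolding complemented_ring_def complemented_elem_def
  proof
    fix f :: "'a fps"
    define I where "I = gen_ideal (range (fps_nth f))"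
    have "countably_generated_ideal I" unfolding countably_generated_ideal_def I_def by (rule exI[of _ "range (fps_nth f)"]) simp
    then obtain J where J: "countably_generated_ideal J" "ideal_prod I J = {0}"
      "dense_ideal (ideal_sum I J)" using R by blast
    obtain S where S: "countable S" "J = gen_ideal S"
      using J(1) unfolding countably_generated_ideal_def by metis
    define e where "e = from_nat_into (insert 0 S)"
    have re: "range e = insert 0 S" unfolding e_def
      by (rule range_from_nat_into) (use S in auto)
    have eJ: "e n \<in> J" for n
    proof -
      have "e n \<in> insert 0 S" using re[symmetric] rangeI[of e n] by simp
      then show ?thesis using S(2) gen_zero gen_mem by auto
    qed
    have fI: "(fps_nth f n) \<in> I" for n unfolding I_def by (rule gen_mem) simp
    define g where "g = Abs_fps e"
    have fg: "f * g = 0"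
      by (rule fps_ext) (simp add: fps_mult_nth g_def prod_zeroD[OF J(2) fI eJ])
    have "regular_elem (f + g)"
      unfolding regular_elem_def
    proof (intro allI impI)
      fix h assume fh: "(f + g) * h = 0"
      show "h = 0"
      proof (rule fps_ext)
        fix j
        define r where "r = (fps_nth h j)"
        have rfe: "((fps_nth f i) + e i) * r = 0" for i
          using arm[OF H fh, of i j] by (simp add: r_def g_def)
        have rf: "r * (fps_nth f i) = 0" for i
        proof -
          have "(r * (fps_nth f i))^2 = (fps_nth f i) * (((fps_nth f i) + e i) * r) * r - r * r * ((fps_nth f i) * e i)"
            by (simp add: power2_eq_square algebra_simps)
          also have "\<dots> = 0" using rfe prod_zeroD[OF J(2) fI eJ] by simp
          finally show ?thesis using H by blast
        qed
        have re': "r * e i = 0" for i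
          using rfe[of i] rf[of i] by (simp add: algebra_simps)
        have "r \<in> annihilator (ideal_sum I J)"
          unfolding annihilator_def ideal_sum_def
        proof (clarify)
          fix i j' assume i: "i \<in> I" and j: "j' \<in> J"
          have "r * i = 0" using i unfolding I_def by (rule gen_ann[rotated]) (auto simp: rf)
          moreover have "r * j' = 0" using j unfolding S(2)
          proof (rule gen_ann[rotated])
            show "\<forall>s\<in>S. r * s = 0"
            proof
              fix s assume "s \<in> S"
              then have "s \<in> range e" using re by simp
              then obtain i where "s = e i" by (auto simp del: range_eqI)
              then show "r * s = 0" using re' by simp
            qed
          qed
          ultimately show "r * (i + j') = 0" by (simp add: distrib_left)
        qed
        then show "(fps_nth h j) = (fps_nth 0 j)" using J(3) unfolding dense_ideal_def r_def by simp
      qed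
    qed
    then show "\<exists>g. f * g = 0 \<and> regular_elem (f + g)" using fg by blast
  qed
qed

end
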